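(* Let $m\ge2$, let $k_1,\dots,k_{m-1}\ge0$ be integers and let $j$ be an integer with $1\le j\le m/2$. Then $\big|e^{(m),j+1}_{k_1,\dots,k_{m-1}}\big|\le\big|e^{(m),j}_{k_1,\dots,k_{m-1}}\big|$. Moreover, if $k_{m-j}\ge1$, then $\big|e^{(m),j+1}_{k_1,\dots,k_{m-1}}\big|\le\frac{j}{m-j}\big|e^{(m),j}_{k_1,\dots,k_{m-1}}\big|$.
   Context: For $1\le j\le m$ and integers $k_1,\dots,k_{m-1}\ge0$, $e^{(m),j}_{k_1,\dots,k_{m-1}}=\prod_{1\le i\le m,\,i\ne j}(i-j)^{k_{(i-j)\bmod m}}$, where $(i-j)\bmod m$ denotes the representative in $\{1,\dots,m-1\}$. *)

theory Defs
  imports Complex_Main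
begin

text \<open>The exponent sequence k is a function
  nat => nat, of which only the values k 1, ..., k (m-1) are used.\<close>
definition e_coef :: "nat \<Rightarrow> (nat \<Rightarrow> nat) \<Rightarrow> nat \<Rightarrow> int" where
  "e_coef m k j = (\<Prod>i\<in>{1..m} - {j}.
      (int i - int j) ^ (k (nat ((int i - int j) mod int m))))"

end

theory Submission
  imports Defs
begin

lemma abs_prod_int: "\<bar>prod f A\<bar> = (\<Prod>x\<in>A. \<bar>f x :: int\<bar>)"
  by (induction A rule: infinite_finite_induct) (auto simp: abs_mult)

lemma abs_e:
  assumes "1 \<le> j" "j \<le> m"
  shows "\<bar>e_coef m k j\<bar> = (\<Prod>r\<in>{1..m-1}. int (if r \<le> m-j then r else m-r) ^ k r)"
proof -
  have "\<bar>e_coef m k j\<bar> = (\<Prod>i\<in>{1..m} - {j}. \<bar>int i - int j\<bar> ^ k (nat ((int i - int j) mod int m)))"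
    unfolding e_coef_def abs_prod_int by (simp add: power_abs)
  also have "\<dots> = (\<Prod>r\<in>{1..m-1}. int (if r \<le> m-j then r else m-r) ^ k r)"
proof (rule prod.reindex_bij_witness[where i = "\<lambda>r. if r \<le> m-j then r+j else r+j-m"
      and j = "\<lambda>i. if j < i then i-j else i+m-j"])
  fix a assume a: "a \<in> {1..m} - {j}"
  show "(if (if j < a then a-j else a+m-j) \<le> m-j then (if j < a then a-j else a+m-j)+j
        else (if j < a then a-j else a+m-j)+j-m) = a" using a assms by auto
  show "(if j < a then a-j else a+m-j) \<in> {1..m-1}" using a assms by auto
  show "int (if (if j < a then a-j else a+m-j) \<le> m-j then (if j < a then a-j else a+m-j)
          else m - (if j < a then a-j else a+m-j)) ^ k (if j < a then a-j else a+m-j)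
        = \<bar>int a - int j\<bar> ^ k (nat ((int a - int j) mod int m))"
  proof (cases "j < a")
    case True
    then have "(int a - int j) mod int m = int a - int j" using a assms
      by (intro mod_pos_pos_trivial) auto
    moreover have "nat (int a - int j) = a - j" using True by auto
    ultimately show ?thesis using True a assms by (auto simp: of_nat_diff)
  next
    case False
    then have "a < j" using a by auto
    have "(int a - int j) mod int m = (int a - int j + int m) mod int m" by simp
    also have "\<dots> = int a - int j + int m" using a assms \<open>a<j\<close>
      by (intro mod_pos_pos_trivial) auto
    moreover have "nat (int a - int j + int m) = a + m - j" using \<open>a<j\<close> assms by auto
    ultimately show ?thesis using False \<open>a<j\<close> a assms by (auto simp: of_nat_diff)
  qed
next
  fix b assume b: "b \<in> {1..m-1}"
  show "(if j < (if b \<le> m-j then b+j else b+j-m) then (if b \<le> m-j then b+j else b+j-m)-j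
        else (if b \<le> m-j then b+j else b+j-m)+m-j) = b" using b assms by auto
  show "(if b \<le> m-j then b+j else b+j-m) \<in> {1..m} - {j}" using b assms by auto
qed
  finally show ?thesis .
qed
theorem mainTheorem14:
  fixes m j :: nat and k :: "nat \<Rightarrow> nat"
  assumes "m \<ge> 2" and "1 \<le> j" and "2 * j \<le> m"
  shows "\<bar>e_coef m k (j + 1)\<bar> \<le> \<bar>e_coef m k j\<bar>
    \<and> (k (m - j) \<ge> 1 \<longrightarrow>
           real_of_int \<bar>e_coef m k (j + 1)\<bar> \<le> real j / real (m - j) * real_of_int \<bar>e_coef m k j\<bar>)"
proof -
  define T where "T = {1..m-1}"
  define P where "P = (\<Prod>r\<in>T-{m-j}. int (if r \<le> m-j then r else m-r) ^ k r)"
  have mT: "m - j \<in> T" using assms unfolding T_def by auto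
  have fin: "finite T" unfolding T_def by simp
  have P2: "(\<Prod>r\<in>T-{m-j}. int (if r \<le> m-(j+1) then r else m-r) ^ k r) = P"
    unfolding P_def by (rule prod.cong) auto
  have e1: "\<bar>e_coef m k j\<bar> = int (m-j) ^ k (m-j) * P"
    using abs_e[of j m k] assms prod.remove[OF fin mT, of "\<lambda>r. int (if r \<le> m-j then r else m-r) ^ k r"]
    unfolding P_def T_def by auto
  have mid: "int (if m-j \<le> m-(j+1) then m-j else m-(m-j)) = int j" using assms by auto
  have e2: "\<bar>e_coef m k (j+1)\<bar> = int j ^ k (m-j) * P"
    using mid abs_e[of "j+1" m k] assms prod.remove[OF fin mT, of "\<lambda>r. int (if r \<le> m-(j+1) then r else m-r) ^ k r"] P2
    unfolding T_def by auto
  have Pnn: "P \<ge> 0" unfolding P_def by (intro prod_nonneg) auto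
  have jle: "j \<le> m - j" using assms by auto
  have A: "int j ^ k (m-j) \<le> int (m-j) ^ k (m-j)" by (rule power_mono) (use jle in auto)
  show ?thesis
  proof
    show "\<bar>e_coef m k (j + 1)\<bar> \<le> \<bar>e_coef m k j\<bar>" unfolding e1 e2
      using A Pnn by (intro mult_right_mono) auto
    show "1 \<le> k (m - j) \<longrightarrow> real_of_int \<bar>e_coef m k (j + 1)\<bar>
          \<le> real j / real (m - j) * real_of_int \<bar>e_coef m k j\<bar>"
    proof
      assume "1 \<le> k (m-j)"
      then obtain n where n: "k (m-j) = Suc n" by (cases "k (m-j)") auto
      have mj: "real (m-j) > 0" using assms by auto
      have B: "real j ^ n \<le> real (m-j) ^ n" by (rule power_mono) (use jle in auto)
      have "real j ^ Suc n = real j * real j ^ n" by simp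
      also have "\<dots> \<le> real j * real (m-j) ^ n" using B by (intro mult_left_mono) auto
      also have "\<dots> = real j / real (m-j) * real (m-j) ^ Suc n" using mj by (simp add: field_simps)
      finally have C: "real j ^ Suc n \<le> real j / real (m-j) * real (m-j) ^ Suc n" .
      have "real_of_int \<bar>e_coef m k (j + 1)\<bar> = real j ^ Suc n * real_of_int P"
        unfolding e2 n by simp
      also have "\<dots> \<le> (real j / real (m-j) * real (m-j) ^ Suc n) * real_of_int P"
        using C Pnn by (intro mult_right_mono) auto
      also have "\<dots> = real j / real (m - j) * real_of_int \<bar>e_coef m k j\<bar>"
        unfolding e1 n using assms by (simp add: of_nat_diff)
      finally show "real_of_int \<bar>e_coef m k (j + 1)\<bar>
          \<le> real j / real (m - j) * real_of_int \<bar>e_coef m k j\<bar>" .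
    qed
  qed
qed

end
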